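(* Let $1\le m\le n$ and let $h:[0,1]^{n-m+1}\rightarrow\mathbb{R}$ be any function. Define $g:[0,1]^n\rightarrow\mathbb{R}$ by $$g(w_1,\dots,w_n) = h\big(\max\{w_1,\dots,w_m\},\,w_{m+1},\dots,w_n\big).$$ Suppose that for each $i\in\{1,\dots,m\}$ the partial derivative $\frac{\partial g}{\partial w_i}(t\mathbf{1})$ exists for almost every $t\in[0,1]$ and $t\mapsto \frac{\partial g}{\partial w_i}(t\mathbf{1})$ is integrable on $[0,1]$. Then the integrated-gradients attributions with baseline $\mathbf{0}$ of the features $1,\dots,m$ are all equal, i.e. $$\int_0^1 \frac{\partial g}{\partial w_i}(t\mathbf{1})\,dt = \int_0^1 \frac{\partial g}{\partial w_j}(t\mathbf{1})\,dt \quad\text{for all } i,j\in\{1,\dots,m\}.$$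
   Context: $\mathbf{1}\in\mathbb{R}^n$ denotes the all-ones vector. For a function $g:[0,1]^n\to\mathbb{R}$, the integrated-gradients attribution of feature $i$ with baseline $\mathbf{0}$ (input $\mathbf{1}$) is $\int_0^1 \frac{\partial g}{\partial w_i}(t\mathbf{1})\,dt$. Features $1,\dots,m$ are called redundant because $g$ depends on them only through their maximum. *)

theory Defs
  imports "HOL-Analysis.Analysis"
begin

text \<open>Points of [0,1]^n are functions nat => real; coordinates are 1..n (other
 coordinates are ignored by the functions considered).\<close>

definition diag :: "real \<Rightarrow> nat \<Rightarrow> real" where
  "diag t = (\<lambda>_. t)"

definition partial_deriv :: "((nat \<Rightarrow> real) \<Rightarrow> real) \<Rightarrow> nat \<Rightarrow> (nat \<Rightarrow> real) \<Rightarrow> real" where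
  "partial_deriv g i x = deriv (\<lambda>s. g (x(i := s))) (x i)"

definition partial_exists :: "((nat \<Rightarrow> real) \<Rightarrow> real) \<Rightarrow> nat \<Rightarrow> (nat \<Rightarrow> real) \<Rightarrow> bool" where
  "partial_exists g i x \<longleftrightarrow> (\<lambda>s. g (x(i := s))) differentiable (at (x i))"

definition integrated_gradient :: "((nat \<Rightarrow> real) \<Rightarrow> real) \<Rightarrow> nat \<Rightarrow> real" where
  "integrated_gradient g i = (LINT t:{0..1}|lborel. partial_deriv g i (diag t))"

end

theory Submission
  imports Defs
begin

lemma img_max:
  fixes m i :: nat and s t :: real
  assumes "2 \<le> m" "i \<in> {1..m}"
  shows "Max ((diag t)(i := s) ` {1..m}) = max s t"
proof -
  obtain k where k: "k \<in> {1..m}" "k \<noteq> i"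
  proof (cases "i = 1")
    case True then show ?thesis using assms by (intro that[of 2]) auto
  next
    case False then show ?thesis using assms by (intro that[of 1]) auto
  qed
  have "(diag t)(i := s) ` {1..m} = {s, t}"
  proof
    show "(diag t)(i := s) ` {1..m} \<subseteq> {s, t}" by (auto simp: diag_def)
    show "{s, t} \<subseteq> (diag t)(i := s) ` {1..m}"
    proof
      fix x assume "x \<in> {s, t}"
      then show "x \<in> (diag t)(i := s) ` {1..m}"
      proof
        assume "x = s" then show ?thesis using assms(2) by (intro image_eqI[of _ _ i]) auto
      next
        assume "x \<in> {t}" then show ?thesis using k by (intro image_eqI[of _ _ k]) (auto simp: diag_def)
      qed
    qed
  qed
  then show ?thesis by (simp add: max_def)
qed

theorem lemma2:
  fixes m n :: nat
    and h :: "(nat \<Rightarrow> real) \<Rightarrow> real"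
    and g :: "(nat \<Rightarrow> real) \<Rightarrow> real"
  assumes "1 \<le> m" and "m \<le> n"
    and g_def: "\<And>w. g w = h (\<lambda>k. if k = 1 then Max (w ` {1..m})
                               else if 2 \<le> k \<and> k \<le> n - m + 1 then w (m + k - 1) else 0)"
    and exists: "\<And>i. i \<in> {1..m} \<Longrightarrow>
                   AE t in lborel. t \<in> {0..1} \<longrightarrow> partial_exists g i (diag t)"
    and integrable: "\<And>i. i \<in> {1..m} \<Longrightarrow>
                   set_integrable lborel {0..1::real} (\<lambda>t. partial_deriv g i (diag t))"
  shows "\<forall>i\<in>{1..m}. \<forall>j\<in>{1..m}. integrated_gradient g i = integrated_gradient g j"
proof (cases "m = 1")
  case True then show ?thesis by auto
next
  case False
  hence m2: "2 \<le> m" using assms(1) by auto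
  define F where "F t u = h (\<lambda>k. if k = 1 then u
                               else if 2 \<le> k \<and> k \<le> n - m + 1 then t else 0)" for t u :: real
  have key: "(\<lambda>s. g ((diag t)(i := s))) = (\<lambda>s. F t (max s t))" if "i \<in> {1..m}" for i t
  proof
    fix s
    have "g ((diag t)(i := s)) = h (\<lambda>k. if k = 1 then max s t
                               else if 2 \<le> k \<and> k \<le> n - m + 1 then ((diag t)(i := s)) (m + k - 1) else 0)"
      unfolding g_def[of "(diag t)(i := s)"] img_max[OF m2 that, of t s] ..
    also have "\<dots> = F t (max s t)" unfolding F_def
      by (rule arg_cong[where f=h]) (use that in \<open>auto simp: diag_def fun_eq_iff\<close>)
    finally show "g ((diag t)(i := s)) = F t (max s t)" .
  qed
  have pd: "partial_deriv g i (diag t) = deriv (\<lambda>s. F t (max s t)) t" if "i \<in> {1..m}" for i t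
    unfolding partial_deriv_def using key[OF that] by (simp add: diag_def)
  show ?thesis unfolding integrated_gradient_def by (simp add: pd)
qed

end
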